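(* For $t>1$, let $\sigma_t=\prod_{n=1}^{\infty} n^{1/t^n}$. Then $$\gamma\!\left(\frac1t\right)=t\log\frac{t}{(t-1)\sigma_t^{\,t-1}}.$$ In particular, $$\lim_{t\to 0^+} t\,\sigma_{t+1}^{\,t}=e^{-\gamma},$$ where $\gamma=\gamma(1)$ is Euler's constant.
   Context: $\gamma(z)=\sum_{n=1}^{\infty} z^{n-1}\left(\frac{1}{n}-\log\frac{n+1}{n}\right)$ for $|z|\le1$. The product $\sigma_t=1^{1/t}2^{1/t^2}3^{1/t^3}\cdots$ (the generalized Somos constant) converges for $t>1$. *)

theory Defs
  imports "HOL-Analysis.Analysis"
begin

text \<open>The power series gamma(z) = sum_{n>=1} z^(n-1) (1/n - log((n+1)/n)), for complex z with |z| <= 1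
  (index shifted so that the summation starts at 0).\<close>
definition gamma_ser :: "complex \<Rightarrow> complex" where
  "gamma_ser z = (\<Sum>n. z ^ n * complex_of_real (1 / real (n + 1) - ln (real (n + 2) / real (n + 1))))"

definition somos :: "real \<Rightarrow> real" where
  "somos t = (\<Prod>n. real (n + 1) powr (1 / t ^ (n + 1)))"

end

theory Submission imports Defs "HOL-Analysis.Analysis" begin
lemma summable_n1:
  fixes x :: real assumes "\<bar>x\<bar> < 1"
  shows "summable (\<lambda>n. real (n+1) * x^n)"
proof -
  have "summable (\<lambda>n. diffs (\<lambda>_. 1::real) n * x^n)"
    by (rule termdiff_converges[where K=1]) (use assms in \<open>auto intro!: summable_geometric\<close>)
  then show ?thesis by (simp add: diffs_def)
qed

lemma summable_S:
  fixes x :: real assumes "0 \<le> x" "x < 1"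
  shows "summable (\<lambda>n. x^n * ln (real (n+1)))"
proof (rule summable_comparison_test[OF _ summable_n1[of x]])
  show "\<exists>N. \<forall>n\<ge>N. norm (x ^ n * ln (real (n + 1))) \<le> real (n + 1) * x ^ n"
  proof (intro exI allI impI)
    fix n :: nat
    have "ln (real (n+1)) \<le> real (n+1)" by (rule ln_le_minus_one[THEN order_trans]) auto
    moreover have "0 \<le> ln (real (n+1))" by simp
    ultimately show "norm (x ^ n * ln (real (n + 1))) \<le> real (n + 1) * x ^ n"
      using assms by (simp add: abs_mult mult.commute mult_left_mono)
  qed
qed (use assms in auto)

lemma sums_log1:
  fixes x :: real assumes "0 < x" "x < 1"
  shows "(\<lambda>n. x^n / real (n+1)) sums (- ln (1 - x) / x)"
proof -
  have "(\<lambda>n. - ((-(-x))^n) / of_nat n) sums ln (1 + (-x))"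
    by (rule ln_series') (use assms in auto)
  then have "(\<lambda>n. - (x^(Suc n)) / of_nat (Suc n)) sums ln (1 - x)"
    by (subst sums_Suc_iff) simp
  then have "(\<lambda>n. (- (x^(Suc n)) / of_nat (Suc n)) / (-x)) sums (ln (1 - x) / (-x))"
    by (rule sums_divide)
  moreover have "(\<lambda>n. (- (x^(Suc n)) / of_nat (Suc n)) / (-x)) = (\<lambda>n. x^n / real (n+1))"
  proof (intro ext)
    fix n
    have "(- (x^(Suc n)) / of_nat (Suc n)) / (-x) = (x * x^n) / (x * real (n+1))"
      by (simp add: field_simps)
    also have "\<dots> = x^n / real (n+1)" using assms by (rule_tac mult_divide_mult_cancel_left) simp
    finally show "(- (x^(Suc n)) / of_nat (Suc n)) / (-x) = x^n / real (n+1)" .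
  qed
  moreover have "ln (1 - x) / (-x) = - ln (1 - x) / x" by simp
  ultimately show ?thesis by simp
qed

definition aa :: "nat \<Rightarrow> real" where
  "aa n = 1 / real (n + 1) - ln (real (n + 2) / real (n + 1))"

definition SS :: "real \<Rightarrow> real" where
  "SS x = (\<Sum>n. x^n * ln (real (n+1)))"

definition gr :: "real \<Rightarrow> real" where
  "gr x = (\<Sum>n. x^n * aa n)"

lemma aa_alt: "aa n = 1 / real (n+1) - (ln (real (n+2)) - ln (real (n+1)))"
  unfolding aa_def by (subst ln_div) auto

lemma gr_sums:
  fixes x :: real assumes "0 < x" "x < 1"
  shows "(\<lambda>n. x^n * aa n) sums (- ln (1 - x) / x - (SS x / x - SS x))"
proof -
  have S: "(\<lambda>n. x^n * ln (real (n+1))) sums SS x"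
    unfolding SS_def using summable_S[of x] assms by (simp add: summable_sums)
  have "(\<lambda>n. x^(Suc n) * ln (real (Suc n+1))) sums SS x"
    using S by (subst sums_Suc_iff) simp
  then have "(\<lambda>n. x^(Suc n) * ln (real (Suc n+1)) / x) sums (SS x / x)"
    by (rule sums_divide)
  moreover have "(\<lambda>n. x^(Suc n) * ln (real (Suc n+1)) / x) = (\<lambda>n. x^n * ln (real (n+2)))"
    using assms by (intro ext) (simp add: field_simps)
  ultimately have S2: "(\<lambda>n. x^n * ln (real (n+2))) sums (SS x / x)" by simp
  have "(\<lambda>n. x^n / real (n+1) - (x^n * ln (real (n+2)) - x^n * ln (real (n+1)))) sums
          (- ln (1 - x) / x - (SS x / x - SS x))"
    by (intro sums_diff sums_log1 S S2 assms)
  moreover have "(\<lambda>n. x^n / real (n+1) - (x^n * ln (real (n+2)) - x^n * ln (real (n+1)))) = (\<lambda>n. x^n * aa n)"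
    by (intro ext) (simp add: aa_alt field_simps)
  ultimately show ?thesis by simp
qed

lemma somos_eq:
  fixes t :: real assumes "t > 1"
  shows "somos t = exp (SS (1/t) / t)"
proof -
  define x where "x = 1 / t"
  have x: "0 < x" "x < 1" using assms by (auto simp: x_def)
  have S: "(\<lambda>n. x^n * ln (real (n+1))) sums SS x"
    unfolding SS_def using summable_S[of x] x by (simp add: summable_sums)
  then have "(\<lambda>n. x * (x^n * ln (real (n+1)))) sums (x * SS x)"
    by (rule sums_mult)
  then have "raw_has_prod (\<lambda>n. exp (x * (x^n * ln (real (n+1))))) 0 (exp (x * SS x))"
    by (rule sums_imp_has_prod_exp)
  moreover have "(\<lambda>n. exp (x * (x^n * ln (real (n+1))))) = (\<lambda>n. real (n + 1) powr (1 / t ^ (n + 1)))"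
    by (intro ext) (simp add: powr_def x_def power_divide field_simps)
  ultimately have "(\<lambda>n. real (n + 1) powr (1 / t ^ (n + 1))) has_prod (exp (x * SS x))"
    by (simp add: has_prod_def)
  then have "somos t = exp (x * SS x)"
    using has_prod_unique unfolding somos_def by metis
  then show ?thesis by (simp add: x_def)
qed
lemma part1_real:
  fixes t :: real assumes t: "t > 1"
  shows "gr (1/t) = t * ln (t / ((t - 1) * somos t powr (t - 1)))"
proof -
  define x where "x = 1 / t"
  have x: "0 < x" "x < 1" using t by (auto simp: x_def)
  have g: "gr x = - ln (1 - x) / x - (SS x / x - SS x)"
    unfolding gr_def using gr_sums[OF x] by (simp add: sums_iff)
  have sp: "somos t powr (t - 1) = exp ((t - 1) * (SS x / t))"
    using somos_eq[OF t] by (simp add: powr_def x_def)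
  have e1: "ln (t / ((t - 1) * somos t powr (t - 1))) = ln t - ln (t - 1) - (t - 1) * (SS x / t)"
    using t by (simp add: sp ln_div ln_mult)
  have e2: "ln (1 - x) = ln (t - 1) - ln t"
  proof -
    have "1 - x = (t - 1) / t" using t by (simp add: x_def field_simps)
    then show ?thesis using t by (simp add: ln_div)
  qed
  have "gr x = - ln (1 - x) * t - (SS x * t - SS x)"
    using g t by (simp add: x_def)
  also have "\<dots> = t * (ln t - ln (t - 1) - (t - 1) * (SS x / t))"
    unfolding e2 using t by (simp add: field_simps)
  also have "\<dots> = t * ln (t / ((t - 1) * somos t powr (t - 1)))"
    by (simp only: e1)
  finally show ?thesis by (simp add: x_def)
qed

lemma gamma_ser_real:
  fixes y :: real assumes "0 < y" "y < 1"
  shows "gamma_ser (complex_of_real y) = complex_of_real (gr y)"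
proof -
  have "(\<lambda>n. y^n * aa n) sums gr y"
    unfolding gr_def using gr_sums[OF assms] by (simp add: sums_iff)
  then have "(\<lambda>n. complex_of_real (y^n * aa n)) sums complex_of_real (gr y)"
    by (subst sums_of_real_iff)
  moreover have "(\<lambda>n. complex_of_real (y^n * aa n)) =
     (\<lambda>n. complex_of_real y ^ n * complex_of_real (1 / real (n + 1) - ln (real (n + 2) / real (n + 1))))"
    by (simp add: aa_def)
  ultimately show ?thesis unfolding gamma_ser_def by (simp add: sums_iff)
qed

lemma aa_nonneg: "aa n \<ge> 0"
proof -
  have "real (n + 2) / real (n + 1) = 1 + 1 / real (n+1)" by (simp add: field_simps)
  then have "ln (real (n + 2) / real (n + 1)) \<le> 1 / real (n+1)"
    using ln_add_one_self_le_self[of "1 / real (n+1)"] by simp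
  then show ?thesis by (simp add: aa_def)
qed

lemma aa_sums: "aa sums euler_mascheroni"
proof -
  have "aa = (\<lambda>n. inverse (of_nat (n+1)) + ln (of_nat (n+1)) - ln (of_nat (n+2)) :: real)"
    by (intro ext) (simp add: aa_alt field_simps)
  then show ?thesis using euler_mascheroni_sum_real by simp
qed

lemma gr_1: "gr 1 = euler_mascheroni"
  unfolding gr_def using aa_sums by (simp add: sums_iff)

lemma gr_cont: "continuous_on {0..1} gr"
proof -
  have ul: "uniform_limit {0..1} (\<lambda>n x. \<Sum>i<n. x^i * aa i) (\<lambda>x. \<Sum>i. x^i * aa i) sequentially"
  proof (rule Weierstrass_m_test)
    show "summable aa" using aa_sums by (rule sums_summable)
    fix n and x :: real assume "x \<in> {0..1}"
    then show "norm (x^n * aa n) \<le> aa n"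
      using aa_nonneg[of n] by (auto simp: abs_mult intro!: mult_left_le_one_le power_le_one)
  qed
  have "continuous_on {0..1} (\<lambda>x. \<Sum>i. x^i * aa i)"
    by (rule uniform_limit_theorem[OF _ ul]) (auto intro!: always_eventually continuous_intros)
  then show ?thesis unfolding gr_def by simp
qed

lemma key_eq:
  fixes t :: real assumes t: "t > 0"
  shows "t * somos (t + 1) powr t = (t + 1) * exp (- gr (1 / (t + 1)) / (t + 1))"
proof -
  define s where "s = t + 1"
  have s: "s > 1" using t by (simp add: s_def)
  define P where "P = somos s powr t"
  have P: "P > 0"
    using somos_eq[OF s] by (simp add: P_def)
  have g: "gr (1/s) = s * ln (s / (t * P))"
    using part1_real[OF s] by (simp add: s_def P_def)
  have Q: "s / (t * P) > 0" using P t s by simp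
  have "ln (s / (t * P)) = gr (1/s) / s" using g s by simp
  then have "s / (t * P) = exp (gr (1/s) / s)" using Q by (metis exp_ln)
  then have "t * P = s * exp (- gr (1/s) / s)" using P t s
    by (simp add: exp_minus field_simps)
  then show ?thesis by (simp add: s_def P_def)
qed

lemma part2: "((\<lambda>t. t * somos (t + 1) powr t) \<longlongrightarrow> exp (- euler_mascheroni)) (at_right 0)"
proof -
  have "((\<lambda>t::real. 1 / (t + 1)) \<longlongrightarrow> 1 / (0 + 1)) (at_right 0)"
    by (intro tendsto_intros) auto
  then have l1: "((\<lambda>t::real. 1 / (t + 1)) \<longlongrightarrow> 1) (at_right 0)" by simp
  have ev: "eventually (\<lambda>t::real. t > 0) (at_right 0)"
    by (rule eventually_at_right_less)
  have "eventually (\<lambda>t::real. 1 / (t + 1) \<in> {0..1}) (at_right 0)"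
    using ev by eventually_elim auto
  then have "((\<lambda>t. gr (1 / (t + 1))) \<longlongrightarrow> gr 1) (at_right 0)"
    by (intro continuous_on_tendsto_compose[OF gr_cont l1]) auto
  then have "((\<lambda>t. (t + 1) * exp (- gr (1 / (t + 1)) / (t + 1))) \<longlongrightarrow> (0 + 1) * exp (- gr 1 / (0 + 1))) (at_right (0::real))"
    by (intro tendsto_intros) auto
  then have lim: "((\<lambda>t. (t + 1) * exp (- gr (1 / (t + 1)) / (t + 1))) \<longlongrightarrow> exp (- euler_mascheroni)) (at_right (0::real))"
    by (simp add: gr_1)
  show ?thesis
    by (rule Lim_transform_eventually[OF lim]) (use ev in \<open>eventually_elim, simp add: key_eq\<close>)
qed

theorem theorem18:
  shows "(\<forall>t::real. t > 1 \<longrightarrow>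
           gamma_ser (complex_of_real (1 / t)) =
           complex_of_real (t * ln (t / ((t - 1) * somos t powr (t - 1)))))
         \<and> ((\<lambda>t. t * somos (t + 1) powr t) \<longlongrightarrow> exp (- euler_mascheroni)) (at_right 0)"
proof (intro conjI allI impI part2)
  fix t :: real assume t: "t > 1"
  have "gamma_ser (complex_of_real (1 / t)) = complex_of_real (gr (1/t))"
    using t by (intro gamma_ser_real) auto
  then show "gamma_ser (complex_of_real (1 / t)) =
           complex_of_real (t * ln (t / ((t - 1) * somos t powr (t - 1))))"
    using part1_real[OF t] by simp
qed
end
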